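(* Consider the linear regression case of the fixed-point system described in the context, i.e. $\tilde T(x)=x+\Phi^{-1}(e)$ and $A(x)=x^2/2$. Then for admissible constants $(v_B,c_B,c_{BB_\star})$ the quantities $r_1,r_2,r_3$ equal $$r_1=\frac{1}{\kappa(v_B-c_B)+1},\qquad r_2=-\frac{\kappa(v_B-c_B)}{\kappa(v_B-c_B)+1},\qquad r_3=\frac{\kappa(\gamma^2+c_B-2c_{BB_\star})+1}{(\kappa(v_B-c_B)+1)^2}.$$ Furthermore, if $\mu$ is the standard Gaussian distribution and $\pi$ is centered, then $$v_B=\frac{1}{r_1+1}+c_B,\qquad c_B=\frac{(r_2+1)^2\gamma^2+r_3}{(r_1+1)^2},\qquad c_{BB_\star}=\frac{(r_2+1)\gamma^2}{r_1+1},$$ and consequently (at the solution of the fixed-point system) $$r_1=r_2+1=\sqrt{(\kappa/2)^2+1}-\kappa/2 .$$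
   Context: Fix $\kappa>0$ and $\gamma>0$, and let $\pi$ be a probability measure on $\mathbb{R}$ with second moment $\gamma^2$; let $\mu$ be a probability measure on $\mathbb{R}$ (density also $\mu$). $\Phi$ is the standard Gaussian cdf. Linear regression model: observations $y_i=\mathbf X_i^\top\boldsymbol\beta_\star+z_i$ with $z_i$ i.i.d. $\mathcal N(0,1)$, corresponding to $\tilde T_i(x)=x+\Phi^{-1}(e_i)$, $e_i\sim\mathrm{Unif}[0,1]$, and $A(x)=x^2/2$. Fixed-point system. For admissible constants $v_B\ge c_B\ge0$, $c_{BB_\star}^2\le\gamma^2c_B$: let $\xi_{B_\star},z_{BB_\star}$ be i.i.d. $\mathcal N(0,1)$ and $e\sim\mathrm{Unif}[0,1]$ independent; $\tilde T(x):=x+\Phi^{-1}(e)$. If $c_B>0$, $\theta(\xi):=\sqrt{\kappa(v_B-c_B)}\xi+\sqrt{\kappa c_B}z_{BB_\star}$, $\theta_\star:=\sqrt{\kappa(\gamma^2-c_{BB_\star}^2/c_B)}\xi_{B_\star}+c_{BB_\star}\sqrt{\kappa/c_B}z_{BB_\star}$; if $c_B=0$, $\theta(\xi):=\sqrt{\kappa v_B}\xi$, $\theta_\star:=\sqrt\kappa\gamma\xi_{B_\star}$. Let $p_s(\xi)\propto\exp\{\tilde T(\theta_\star)\theta(\xi)-A(\theta(\xi))-\xi^2/2\}$, with expectation, variance, covariance $\langle\cdot\rangle_s,\mathrm{Var}_s,\mathrm{Cov}_s$, and $\mathbb{E}_{G\otimes e}$ the expectation over $(\xi_{B_\star},z_{BB_\star},e)$.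 With $S_{\theta_\star}(\xi):=\tilde T'(\theta_\star)\theta(\xi)$ and $S_\theta(\xi):=\tilde T(\theta_\star)-A'(\theta(\xi))$, define $r_1:=\mathbb{E}_{G\otimes e}[\langle A''(\theta(\xi))\rangle_s-\mathrm{Var}_s(S_\theta)]$, $r_2:=\mathbb{E}_{G\otimes e}[\mathrm{Cov}_s(S_{\theta_\star},S_\theta)]$, $r_3:=\mathbb{E}_{G\otimes e}[\langle S_\theta\rangle_s^2]$. Given $r_1,r_2,r_3$, let $t_\gamma:=\mathbb{E}[\tilde T'(\cdot)]=1$, $\alpha:=(r_2+t_\gamma)/r_1$, $\sigma:=\sqrt{r_3}/r_1$, $v:=1/r_1$; with $B_\star\sim\pi$, $Z\sim\mathcal N(0,1)$ independent, $m:=\alpha B_\star+\sigma Z$, let $p_h(db)\propto e^{-(b-m)^2/(2v)}\mu(db)$ with expectation $\langle\cdot\rangle_h$, and set $v_B=\mathbb{E}_{Z,B_\star}\langle\beta^2\rangle_h$, $c_B=\mathbb{E}_{Z,B_\star}\langle\beta\rangle_h^2$, $c_{BB_\star}=\mathbb{E}_{Z,B_\star}\langle\beta B_\star\rangle_h$. The fixed-point system consists of both sets of relations simultaneously. *)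

theory Defs
  imports "HOL-Probability.Probability"
begin

definition Phi :: "real \<Rightarrow> real" where
  "Phi x = (\<integral>t. indicator {..x} t * std_normal_density t \<partial>lborel)"

definition Phi_inv :: "real \<Rightarrow> real" where
  "Phi_inv p = (THE x. Phi x = p)"

definition gauss :: "real measure" where
  "gauss = density lborel std_normal_density"

definition unif01 :: "real measure" where
  "unif01 = uniform_measure lborel {0..1}"

text \<open>Expectation over independent (xi_Bstar, z_BBstar, e) with
  xi_Bstar, z_BBstar ~ N(0,1), e ~ Unif[0,1].\<close>
definition E_Ge :: "(real \<Rightarrow> real \<Rightarrow> real \<Rightarrow> real) \<Rightarrow> real" where
  "E_Ge f = integral\<^sup>L (gauss \<Otimes>\<^sub>M (gauss \<Otimes>\<^sub>M unif01)) (\<lambda>(xs, z, e). f xs z e)"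

definition theta :: "real \<Rightarrow> real \<Rightarrow> real \<Rightarrow> real \<Rightarrow> real \<Rightarrow> real" where
  "theta \<kappa> vB cB z \<xi> =
     (if cB > 0 then sqrt (\<kappa> * (vB - cB)) * \<xi> + sqrt (\<kappa> * cB) * z
      else sqrt (\<kappa> * vB) * \<xi>)"

definition theta_star :: "real \<Rightarrow> real \<Rightarrow> real \<Rightarrow> real \<Rightarrow> real \<Rightarrow> real \<Rightarrow> real" where
  "theta_star \<kappa> \<gamma> cB cBB xs z =
     (if cB > 0 then sqrt (\<kappa> * (\<gamma>\<^sup>2 - cBB\<^sup>2 / cB)) * xs + cBB * sqrt (\<kappa> / cB) * z
      else sqrt \<kappa> * \<gamma> * xs)"

text \<open>T e x is the random link T~(x) for the randomness e; A is the cumulant function.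
  Unnormalised density of p_s in xi, for fixed (xs, z, e).\<close>
definition s_weight ::
  "(real \<Rightarrow> real \<Rightarrow> real) \<Rightarrow> (real \<Rightarrow> real) \<Rightarrow> real \<Rightarrow> real \<Rightarrow> real \<Rightarrow> real \<Rightarrow> real
    \<Rightarrow> real \<Rightarrow> real \<Rightarrow> real \<Rightarrow> real \<Rightarrow> real" where
  "s_weight T A \<kappa> \<gamma> vB cB cBB xs z e \<xi> =
     exp (T e (theta_star \<kappa> \<gamma> cB cBB xs z) * theta \<kappa> vB cB z \<xi>
          - A (theta \<kappa> vB cB z \<xi>) - \<xi>\<^sup>2 / 2)"

definition s_avg ::
  "(real \<Rightarrow> real \<Rightarrow> real) \<Rightarrow> (real \<Rightarrow> real) \<Rightarrow> real \<Rightarrow> real \<Rightarrow> real \<Rightarrow> real \<Rightarrow> real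
    \<Rightarrow> real \<Rightarrow> real \<Rightarrow> real \<Rightarrow> (real \<Rightarrow> real) \<Rightarrow> real" where
  "s_avg T A \<kappa> \<gamma> vB cB cBB xs z e g =
     (\<integral>\<xi>. g \<xi> * s_weight T A \<kappa> \<gamma> vB cB cBB xs z e \<xi> \<partial>lborel)
     / (\<integral>\<xi>. s_weight T A \<kappa> \<gamma> vB cB cBB xs z e \<xi> \<partial>lborel)"

definition s_cov ::
  "(real \<Rightarrow> real \<Rightarrow> real) \<Rightarrow> (real \<Rightarrow> real) \<Rightarrow> real \<Rightarrow> real \<Rightarrow> real \<Rightarrow> real \<Rightarrow> real
    \<Rightarrow> real \<Rightarrow> real \<Rightarrow> real \<Rightarrow> (real \<Rightarrow> real) \<Rightarrow> (real \<Rightarrow> real) \<Rightarrow> real" where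
  "s_cov T A \<kappa> \<gamma> vB cB cBB xs z e f g =
     s_avg T A \<kappa> \<gamma> vB cB cBB xs z e (\<lambda>\<xi>. f \<xi> * g \<xi>)
     - s_avg T A \<kappa> \<gamma> vB cB cBB xs z e f * s_avg T A \<kappa> \<gamma> vB cB cBB xs z e g"

definition s_var ::
  "(real \<Rightarrow> real \<Rightarrow> real) \<Rightarrow> (real \<Rightarrow> real) \<Rightarrow> real \<Rightarrow> real \<Rightarrow> real \<Rightarrow> real \<Rightarrow> real
    \<Rightarrow> real \<Rightarrow> real \<Rightarrow> real \<Rightarrow> (real \<Rightarrow> real) \<Rightarrow> real" where
  "s_var T A \<kappa> \<gamma> vB cB cBB xs z e f = s_cov T A \<kappa> \<gamma> vB cB cBB xs z e f f"

definition S_theta_star ::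
  "(real \<Rightarrow> real \<Rightarrow> real) \<Rightarrow> real \<Rightarrow> real \<Rightarrow> real \<Rightarrow> real \<Rightarrow> real \<Rightarrow> real
    \<Rightarrow> real \<Rightarrow> real \<Rightarrow> real \<Rightarrow> real" where
  "S_theta_star T \<kappa> \<gamma> vB cB cBB xs z e \<xi> =
     deriv (T e) (theta_star \<kappa> \<gamma> cB cBB xs z) * theta \<kappa> vB cB z \<xi>"

definition S_theta ::
  "(real \<Rightarrow> real \<Rightarrow> real) \<Rightarrow> (real \<Rightarrow> real) \<Rightarrow> real \<Rightarrow> real \<Rightarrow> real \<Rightarrow> real \<Rightarrow> real
    \<Rightarrow> real \<Rightarrow> real \<Rightarrow> real \<Rightarrow> real \<Rightarrow> real" where
  "S_theta T A \<kappa> \<gamma> vB cB cBB xs z e \<xi> =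
     T e (theta_star \<kappa> \<gamma> cB cBB xs z) - deriv A (theta \<kappa> vB cB z \<xi>)"

definition r1 ::
  "(real \<Rightarrow> real \<Rightarrow> real) \<Rightarrow> (real \<Rightarrow> real) \<Rightarrow> real \<Rightarrow> real \<Rightarrow> real \<Rightarrow> real \<Rightarrow> real \<Rightarrow> real" where
  "r1 T A \<kappa> \<gamma> vB cB cBB = E_Ge (\<lambda>xs z e.
     s_avg T A \<kappa> \<gamma> vB cB cBB xs z e (\<lambda>\<xi>. deriv (deriv A) (theta \<kappa> vB cB z \<xi>))
     - s_var T A \<kappa> \<gamma> vB cB cBB xs z e (S_theta T A \<kappa> \<gamma> vB cB cBB xs z e))"

definition r2 ::
  "(real \<Rightarrow> real \<Rightarrow> real) \<Rightarrow> (real \<Rightarrow> real) \<Rightarrow> real \<Rightarrow> real \<Rightarrow> real \<Rightarrow> real \<Rightarrow> real \<Rightarrow> real" where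
  "r2 T A \<kappa> \<gamma> vB cB cBB = E_Ge (\<lambda>xs z e.
     s_cov T A \<kappa> \<gamma> vB cB cBB xs z e (S_theta_star T \<kappa> \<gamma> vB cB cBB xs z e)
        (S_theta T A \<kappa> \<gamma> vB cB cBB xs z e))"

definition r3 ::
  "(real \<Rightarrow> real \<Rightarrow> real) \<Rightarrow> (real \<Rightarrow> real) \<Rightarrow> real \<Rightarrow> real \<Rightarrow> real \<Rightarrow> real \<Rightarrow> real \<Rightarrow> real" where
  "r3 T A \<kappa> \<gamma> vB cB cBB = E_Ge (\<lambda>xs z e.
     (s_avg T A \<kappa> \<gamma> vB cB cBB xs z e (S_theta T A \<kappa> \<gamma> vB cB cBB xs z e))\<^sup>2)"

definition T_lin :: "real \<Rightarrow> real \<Rightarrow> real" where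
  "T_lin e x = x + Phi_inv e"

definition A_lin :: "real \<Rightarrow> real" where
  "A_lin x = x\<^sup>2 / 2"

definition h_avg :: "real measure \<Rightarrow> real \<Rightarrow> real \<Rightarrow> (real \<Rightarrow> real) \<Rightarrow> real" where
  "h_avg \<mu> m v g =
     (\<integral>b. g b * exp (- (b - m)\<^sup>2 / (2 * v)) \<partial>\<mu>) / (\<integral>b. exp (- (b - m)\<^sup>2 / (2 * v)) \<partial>\<mu>)"

definition h_alpha :: "real \<Rightarrow> real \<Rightarrow> real \<Rightarrow> real" where
  "h_alpha t\<gamma> q1 q2 = (q2 + t\<gamma>) / q1"

definition h_sigma :: "real \<Rightarrow> real \<Rightarrow> real" where
  "h_sigma q1 q3 = sqrt q3 / q1"

definition h_m :: "real \<Rightarrow> real \<Rightarrow> real \<Rightarrow> real \<Rightarrow> real \<Rightarrow> real \<Rightarrow> real" where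
  "h_m t\<gamma> q1 q2 q3 Bs Z = h_alpha t\<gamma> q1 q2 * Bs + h_sigma q1 q3 * Z"

definition E_ZB :: "real measure \<Rightarrow> (real \<Rightarrow> real \<Rightarrow> real) \<Rightarrow> real" where
  "E_ZB \<pi> f = integral\<^sup>L (gauss \<Otimes>\<^sub>M \<pi>) (\<lambda>(Z, Bs). f Z Bs)"

definition h_vB :: "real measure \<Rightarrow> real measure \<Rightarrow> real \<Rightarrow> real \<Rightarrow> real \<Rightarrow> real \<Rightarrow> real" where
  "h_vB \<pi> \<mu> t\<gamma> q1 q2 q3 = E_ZB \<pi> (\<lambda>Z Bs.
     h_avg \<mu> (h_m t\<gamma> q1 q2 q3 Bs Z) (1 / q1) (\<lambda>b. b\<^sup>2))"

definition h_cB :: "real measure \<Rightarrow> real measure \<Rightarrow> real \<Rightarrow> real \<Rightarrow> real \<Rightarrow> real \<Rightarrow> real" where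
  "h_cB \<pi> \<mu> t\<gamma> q1 q2 q3 = E_ZB \<pi> (\<lambda>Z Bs.
     (h_avg \<mu> (h_m t\<gamma> q1 q2 q3 Bs Z) (1 / q1) (\<lambda>b. b))\<^sup>2)"

definition h_cBB :: "real measure \<Rightarrow> real measure \<Rightarrow> real \<Rightarrow> real \<Rightarrow> real \<Rightarrow> real \<Rightarrow> real" where
  "h_cBB \<pi> \<mu> t\<gamma> q1 q2 q3 = E_ZB \<pi> (\<lambda>Z Bs.
     h_avg \<mu> (h_m t\<gamma> q1 q2 q3 Bs Z) (1 / q1) (\<lambda>b. b * Bs))"

end

theory Submission
  imports Defs
begin

lemma nd_quad:
  fixes m s c0 c1 c2 :: real
  assumes s: "s > 0"
  shows "integrable lborel (\<lambda>x. (c0 + c1 * x + c2 * x\<^sup>2) * normal_density m s x)"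
    and "(\<integral>x. (c0 + c1 * x + c2 * x\<^sup>2) * normal_density m s x \<partial>lborel) = c0 + c1 * m + c2 * (m\<^sup>2 + s\<^sup>2)"
proof -
  have i0: "integrable lborel (\<lambda>x. normal_density m s x)" using integrable_normal_density[OF s] by simp
  have i1: "integrable lborel (\<lambda>x. normal_density m s x * x)"
    using integrable_normal_moment_nz_1[OF s] .
  have i2': "integrable lborel (\<lambda>x. normal_density m s x * (x - m)^2)"
    using integrable_normal_moment[OF s, of m 2] .
  have e2': "(\<integral>x. normal_density m s x * (x - m)^(2*1) \<partial>lborel) = s\<^sup>2"
    using integral_normal_moment_even[OF s, of m 1] by (simp add: power2_eq_square)
  have eq2: "\<And>x. normal_density m s x * x\<^sup>2 = normal_density m s x * (x - m)^2 + 2 * m * (normal_density m s x * x) - m\<^sup>2 * normal_density m s x"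
    by (simp add: power2_eq_square algebra_simps)
  have i2: "integrable lborel (\<lambda>x. normal_density m s x * x\<^sup>2)"
    unfolding eq2 using i0 i1 i2' by (intro Bochner_Integration.integrable_diff Bochner_Integration.integrable_add Bochner_Integration.integrable_mult_right) auto
  have e2: "(\<integral>x. normal_density m s x * x\<^sup>2 \<partial>lborel) = s\<^sup>2 + m\<^sup>2"
  proof -
    have ia: "integrable lborel (\<lambda>x. normal_density m s x * (x - m)^2 + 2 * m * (normal_density m s x * x))"
      using i1 i2' by (intro Bochner_Integration.integrable_add Bochner_Integration.integrable_mult_right)
    have "(\<integral>x. normal_density m s x * x\<^sup>2 \<partial>lborel) = (\<integral>x. normal_density m s x * (x - m)^2 + 2 * m * (normal_density m s x * x) \<partial>lborel) - (\<integral>x. m\<^sup>2 * normal_density m s x \<partial>lborel)"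
      unfolding eq2 by (rule Bochner_Integration.integral_diff[OF ia]) (use i0 in simp)
    also have "\<dots> = (\<integral>x. normal_density m s x * (x - m)^2 \<partial>lborel) + 2 * m * (\<integral>x. normal_density m s x * x \<partial>lborel) - m\<^sup>2"
      using i1 i2' s by (subst Bochner_Integration.integral_add) auto
    finally show ?thesis using e2' integral_normal_moment_nz_1[OF s, of m] by (simp add: power2_eq_square)
  qed
  have eq: "\<And>x. (c0 + c1 * x + c2 * x\<^sup>2) * normal_density m s x
     = c0 * normal_density m s x + c1 * (normal_density m s x * x) + c2 * (normal_density m s x * x\<^sup>2)"
    by (simp add: algebra_simps)
  show "integrable lborel (\<lambda>x. (c0 + c1 * x + c2 * x\<^sup>2) * normal_density m s x)"
    unfolding eq using i0 i1 i2 by (intro Bochner_Integration.integrable_add Bochner_Integration.integrable_mult_right) auto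
  show "(\<integral>x. (c0 + c1 * x + c2 * x\<^sup>2) * normal_density m s x \<partial>lborel) = c0 + c1 * m + c2 * (m\<^sup>2 + s\<^sup>2)"
    unfolding eq using i0 i1 i2 e2 integral_normal_moment_nz_1[OF s, of m]
    by (simp add: Bochner_Integration.integral_add Bochner_Integration.integrable_add integral_normal_density[OF s]; simp add: algebra_simps)
qed

lemma gauss_ratio:
  fixes A B C D c0 c1 c2 :: real and w g :: "real \<Rightarrow> real"
  assumes A: "A > 0" and D: "D > 0"
    and w: "\<And>x. w x = D * exp (- (A * x\<^sup>2) / 2 + B * x + C)"
    and g: "\<And>x. g x = c0 + c1 * x + c2 * x\<^sup>2"
  shows "(\<integral>x. g x * w x \<partial>lborel) / (\<integral>x. w x \<partial>lborel) = c0 + c1 * (B / A) + c2 * ((B / A)\<^sup>2 + 1 / A)"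
proof -
  define s where "s = 1 / sqrt A"
  define m where "m = B / A"
  define K where "K = D * exp (C + B\<^sup>2 / (2 * A)) * sqrt (2 * pi / A)"
  have s: "s > 0" using A by (simp add: s_def)
  have s2: "s\<^sup>2 = 1 / A" using A by (simp add: s_def power_divide)
  have K: "K > 0" using A D by (simp add: K_def)
  have wK: "w x = K * normal_density m s x" for x
  proof -
    have e: "- (A * x\<^sup>2) / 2 + B * x + C = (C + B\<^sup>2 / (2 * A)) + (-(x - m)\<^sup>2 / (2 * s\<^sup>2))"
      using A unfolding s2 m_def by (simp add: field_simps power2_eq_square)
    have n: "sqrt (2 * pi / A) * (1 / sqrt (2 * pi * s\<^sup>2)) = 1"
      using A unfolding s2 by (simp add: real_sqrt_divide)
    show ?thesis unfolding w normal_density_def K_def e exp_add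
      using n A by (simp add: algebra_simps)
  qed
  have num: "(\<integral>x. g x * w x \<partial>lborel) = K * (c0 + c1 * m + c2 * (m\<^sup>2 + s\<^sup>2))"
  proof -
    have "(\<integral>x. g x * w x \<partial>lborel) = (\<integral>x. K * ((c0 + c1 * x + c2 * x\<^sup>2) * normal_density m s x) \<partial>lborel)"
      unfolding g wK by (simp add: algebra_simps)
    also have "\<dots> = K * (c0 + c1 * m + c2 * (m\<^sup>2 + s\<^sup>2))"
      using nd_quad(2)[OF s] by simp
    finally show ?thesis .
  qed
  have den: "(\<integral>x. w x \<partial>lborel) = K"
    unfolding wK using integral_normal_density[OF s] by simp
  show ?thesis unfolding num den using K by (simp add: m_def s2)
qed

lemma deriv_A_lin: "deriv A_lin = (\<lambda>x. x)"
proof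
  fix x show "deriv A_lin x = x"
    unfolding A_lin_def by (rule DERIV_imp_deriv) (auto intro!: derivative_eq_intros)
qed

lemma deriv2_A_lin: "deriv (deriv A_lin) x = 1"
  unfolding deriv_A_lin by (rule DERIV_imp_deriv) (auto intro!: derivative_eq_intros)

lemma deriv_T_lin: "deriv (T_lin e) x = 1"
  unfolding T_lin_def by (rule DERIV_imp_deriv) (auto intro!: derivative_eq_intros)

lemma theta_eq:
  assumes "0 \<le> cB"
  shows "theta \<kappa> vB cB z \<xi> = sqrt (\<kappa> * (vB - cB)) * \<xi> + sqrt (\<kappa> * cB) * z"
  using assms unfolding theta_def by auto

lemma s_avg_quad:
  fixes \<kappa> \<gamma> vB cB cBB xs z e :: real
  assumes cB: "0 \<le> cB" and kv: "0 \<le> \<kappa> * (vB - cB)"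
    and g: "\<And>x. g x = c0 + c1 * x + c2 * x\<^sup>2"
  shows "s_avg T_lin A_lin \<kappa> \<gamma> vB cB cBB xs z e g =
     c0 + c1 * (sqrt (\<kappa> * (vB - cB)) * (T_lin e (theta_star \<kappa> \<gamma> cB cBB xs z) - sqrt (\<kappa> * cB) * z) / (1 + \<kappa> * (vB - cB)))
     + c2 * ((sqrt (\<kappa> * (vB - cB)) * (T_lin e (theta_star \<kappa> \<gamma> cB cBB xs z) - sqrt (\<kappa> * cB) * z) / (1 + \<kappa> * (vB - cB)))\<^sup>2
             + 1 / (1 + \<kappa> * (vB - cB)))"
proof -
  define a where "a = sqrt (\<kappa> * (vB - cB))"
  define b where "b = sqrt (\<kappa> * cB) * z"
  define y where "y = T_lin e (theta_star \<kappa> \<gamma> cB cBB xs z)"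
  have a2: "a\<^sup>2 = \<kappa> * (vB - cB)" using kv by (simp add: a_def)
  have w: "s_weight T_lin A_lin \<kappa> \<gamma> vB cB cBB xs z e x
      = 1 * exp (- ((1 + a\<^sup>2) * x\<^sup>2) / 2 + (a * (y - b)) * x + (y * b - b\<^sup>2 / 2))" for x
    unfolding s_weight_def theta_eq[OF cB] A_lin_def a_def[symmetric] b_def[symmetric] y_def[symmetric]
    by (simp add: power2_eq_square field_simps)
  have "s_avg T_lin A_lin \<kappa> \<gamma> vB cB cBB xs z e g
     = c0 + c1 * (a * (y - b) / (1 + a\<^sup>2)) + c2 * ((a * (y - b) / (1 + a\<^sup>2))\<^sup>2 + 1 / (1 + a\<^sup>2))"
    unfolding s_avg_def
    by (rule gauss_ratio[OF _ _ w g]) (auto intro: add_pos_nonneg)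
  then show ?thesis unfolding a2 by (simp add: a_def b_def y_def)
qed

lemma alg_facts: fixes a W b k :: real assumes a2: "a^2 = k" shows
 "(-a) * (a * W / (1 + k)) = - (k * W / (1 + k))"
 "(- 2 * a * W) * (a * W / (1 + k)) = - 2 * (k * W * W / (1 + k))"
 "(a * a) = k"
 "(a * W / (1 + k))\<^sup>2 = k * W\<^sup>2 / (1 + k)\<^sup>2"
 "(a * W - a * b) * (a * W / (1 + k)) = k * W * (W - b) / (1 + k)"
 "a * (a * W / (1 + k)) = k * W / (1 + k)"
 "(- (a * a)) = - k"
  using a2 by (simp_all add: power2_eq_square power_divide algebra_simps)

lemma s_integrands:
  fixes \<kappa> \<gamma> vB cB cBB xs z e :: real
  assumes cB: "0 \<le> cB" and kv: "0 \<le> \<kappa> * (vB - cB)"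
  shows "s_avg T_lin A_lin \<kappa> \<gamma> vB cB cBB xs z e (\<lambda>\<xi>. deriv (deriv A_lin) (theta \<kappa> vB cB z \<xi>))
          - s_var T_lin A_lin \<kappa> \<gamma> vB cB cBB xs z e (S_theta T_lin A_lin \<kappa> \<gamma> vB cB cBB xs z e)
         = 1 / (\<kappa> * (vB - cB) + 1)"
    and "s_cov T_lin A_lin \<kappa> \<gamma> vB cB cBB xs z e (S_theta_star T_lin \<kappa> \<gamma> vB cB cBB xs z e)
          (S_theta T_lin A_lin \<kappa> \<gamma> vB cB cBB xs z e) = - (\<kappa> * (vB - cB)) / (\<kappa> * (vB - cB) + 1)"
    and "(s_avg T_lin A_lin \<kappa> \<gamma> vB cB cBB xs z e (S_theta T_lin A_lin \<kappa> \<gamma> vB cB cBB xs z e))\<^sup>2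
         = ((T_lin e (theta_star \<kappa> \<gamma> cB cBB xs z) - sqrt (\<kappa> * cB) * z) / (\<kappa> * (vB - cB) + 1))\<^sup>2"
proof -
  define k where "k = \<kappa> * (vB - cB)"
  define a where "a = sqrt (\<kappa> * (vB - cB))"
  define b where "b = sqrt (\<kappa> * cB) * z"
  define y where "y = T_lin e (theta_star \<kappa> \<gamma> cB cBB xs z)"
  define Y where "Y = y - b"
  have k: "0 \<le> k" using kv by (simp add: k_def)
  have a2: "a ^ 2 = k" using kv by (simp add: a_def k_def)
  note F = alg_facts[OF a2]
  have k1: "k + 1 > 0" "1 + k > 0" using k by simp_all
  obtain d where dd: "d = 1 + k" by simp
  have kd: "k = d - 1" using dd by simp
  have d0: "d > 0" using k dd by simp
  note Q = s_avg_quad[OF cB kv, where \<gamma>=\<gamma> and cBB=cBB and xs=xs and z=z and e=e, folded k_def a_def b_def y_def, folded Y_def]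
  have th: "theta \<kappa> vB cB z x = a * x + b" for x using theta_eq[OF cB] by (simp add: a_def b_def)
  have St: "S_theta T_lin A_lin \<kappa> \<gamma> vB cB cBB xs z e x = Y + (- a) * x + 0 * x\<^sup>2" for x
    unfolding S_theta_def deriv_A_lin th y_def[symmetric] Y_def by simp
  have Sts: "S_theta_star T_lin \<kappa> \<gamma> vB cB cBB xs z e x = b + a * x + 0 * x\<^sup>2" for x
    unfolding S_theta_star_def deriv_T_lin th by simp
  have v1: "s_avg T_lin A_lin \<kappa> \<gamma> vB cB cBB xs z e (\<lambda>\<xi>. deriv (deriv A_lin) (theta \<kappa> vB cB z \<xi>)) = 1"
  proof -
    have g1: "(\<lambda>\<xi>. deriv (deriv A_lin) (theta \<kappa> vB cB z \<xi>)) x = 1 + 0 * x + 0 * x\<^sup>2" for x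
      by (simp add: deriv2_A_lin)
    show ?thesis using Q[OF g1] by simp
  qed
  have vS: "s_avg T_lin A_lin \<kappa> \<gamma> vB cB cBB xs z e (S_theta T_lin A_lin \<kappa> \<gamma> vB cB cBB xs z e)
      = Y - k * Y / (1 + k)"
    using Q[OF St] F by simp
  have vSS: "s_avg T_lin A_lin \<kappa> \<gamma> vB cB cBB xs z e (\<lambda>x. S_theta T_lin A_lin \<kappa> \<gamma> vB cB cBB xs z e x * S_theta T_lin A_lin \<kappa> \<gamma> vB cB cBB xs z e x)
      = Y\<^sup>2 - 2 * (k * Y * Y / (1 + k)) + k * (k * Y\<^sup>2 / (1 + k)\<^sup>2 + 1 / (1 + k))"
  proof -
    have "s_avg T_lin A_lin \<kappa> \<gamma> vB cB cBB xs z e (\<lambda>x. S_theta T_lin A_lin \<kappa> \<gamma> vB cB cBB xs z e x * S_theta T_lin A_lin \<kappa> \<gamma> vB cB cBB xs z e x)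
      = Y\<^sup>2 + (- 2 * a * Y) * (a * Y / (1 + k)) + (a * a) * ((a * Y / (1 + k))\<^sup>2 + 1 / (1 + k))"
      by (rule Q) (simp add: St power2_eq_square algebra_simps)
    then show ?thesis unfolding F by simp
  qed
  have vSt: "s_avg T_lin A_lin \<kappa> \<gamma> vB cB cBB xs z e (S_theta_star T_lin \<kappa> \<gamma> vB cB cBB xs z e)
      = b + k * Y / (1 + k)"
    using Q[OF Sts] F by simp
  have vStS: "s_avg T_lin A_lin \<kappa> \<gamma> vB cB cBB xs z e (\<lambda>x. S_theta_star T_lin \<kappa> \<gamma> vB cB cBB xs z e x * S_theta T_lin A_lin \<kappa> \<gamma> vB cB cBB xs z e x)
      = b * Y + k * Y * (Y - b) / (1 + k) - k * (k * Y\<^sup>2 / (1 + k)\<^sup>2 + 1 / (1 + k))"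
  proof -
    have "s_avg T_lin A_lin \<kappa> \<gamma> vB cB cBB xs z e (\<lambda>x. S_theta_star T_lin \<kappa> \<gamma> vB cB cBB xs z e x * S_theta T_lin A_lin \<kappa> \<gamma> vB cB cBB xs z e x)
      = b * Y + (a * Y - a * b) * (a * Y / (1 + k)) + (- (a * a)) * ((a * Y / (1 + k))\<^sup>2 + 1 / (1 + k))"
      by (rule Q) (simp add: St Sts power2_eq_square algebra_simps)
    then show ?thesis unfolding F by simp
  qed
  show "s_avg T_lin A_lin \<kappa> \<gamma> vB cB cBB xs z e (\<lambda>\<xi>. deriv (deriv A_lin) (theta \<kappa> vB cB z \<xi>))
          - s_var T_lin A_lin \<kappa> \<gamma> vB cB cBB xs z e (S_theta T_lin A_lin \<kappa> \<gamma> vB cB cBB xs z e)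
         = 1 / (\<kappa> * (vB - cB) + 1)"
    unfolding s_var_def s_cov_def v1 vS vSS k_def[symmetric] unfolding kd using d0
    by (simp add: field_simps; simp add: power2_eq_square algebra_simps)
  show "s_cov T_lin A_lin \<kappa> \<gamma> vB cB cBB xs z e (S_theta_star T_lin \<kappa> \<gamma> vB cB cBB xs z e)
          (S_theta T_lin A_lin \<kappa> \<gamma> vB cB cBB xs z e) = - (\<kappa> * (vB - cB)) / (\<kappa> * (vB - cB) + 1)"
    unfolding s_cov_def vStS vS vSt k_def[symmetric] unfolding kd using d0
    by (simp add: field_simps; simp add: power2_eq_square algebra_simps)
  show "(s_avg T_lin A_lin \<kappa> \<gamma> vB cB cBB xs z e (S_theta T_lin A_lin \<kappa> \<gamma> vB cB cBB xs z e))\<^sup>2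
         = ((T_lin e (theta_star \<kappa> \<gamma> cB cBB xs z) - sqrt (\<kappa> * cB) * z) / (\<kappa> * (vB - cB) + 1))\<^sup>2"
    unfolding vS k_def[symmetric] y_def[symmetric] b_def[symmetric] Y_def[symmetric] unfolding kd using d0
    by (simp add: field_simps; simp add: power2_eq_square algebra_simps)
qed

lemma prod_int:
  fixes f :: "'a \<Rightarrow> real" and g :: "'b \<Rightarrow> real"
  assumes P1: "prob_space M1" and P2: "prob_space M2"
    and f: "integrable M1 f" and g: "integrable M2 g"
  shows "integrable (M1 \<Otimes>\<^sub>M M2) (\<lambda>(x, y). f x * g y)"
    and "(\<integral>p. (\<lambda>(x, y). f x * g y) p \<partial>(M1 \<Otimes>\<^sub>M M2)) = (\<integral>x. f x \<partial>M1) * (\<integral>y. g y \<partial>M2)"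
proof -
  interpret P: pair_prob_space M1 M2
    using P1 P2 by (simp add: pair_prob_space_def pair_sigma_finite_def prob_space_imp_sigma_finite)
  have [measurable]: "f \<in> borel_measurable M1" "g \<in> borel_measurable M2"
    using f g by auto
  show I: "integrable (M1 \<Otimes>\<^sub>M M2) (\<lambda>(x, y). f x * g y)"
  proof (rule P.Fubini_integrable)
    show "(\<lambda>(x, y). f x * g y) \<in> borel_measurable (M1 \<Otimes>\<^sub>M M2)" by measurable
    have "integrable M1 (\<lambda>x. norm (f x) * (\<integral>y. norm (g y) \<partial>M2))"
      using f by (intro Bochner_Integration.integrable_mult_left integrable_norm)
    then show "integrable M1 (\<lambda>x. \<integral>y. norm ((\<lambda>(x, y). f x * g y) (x, y)) \<partial>M2)"
      by (simp add: abs_mult)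
    show "AE x in M1. integrable M2 (\<lambda>y. (\<lambda>(x, y). f x * g y) (x, y))"
      using g by (auto intro!: Bochner_Integration.integrable_mult_right)
  qed
  have "(\<integral>p. (\<lambda>(x, y). f x * g y) p \<partial>(M1 \<Otimes>\<^sub>M M2)) = (\<integral>x. (\<integral>y. f x * g y \<partial>M2) \<partial>M1)"
    using P.integral_fst[of "\<lambda>x y. f x * g y"] I by simp
  also have "\<dots> = (\<integral>x. f x \<partial>M1) * (\<integral>y. g y \<partial>M2)"
    by simp
  finally show "(\<integral>p. (\<lambda>(x, y). f x * g y) p \<partial>(M1 \<Otimes>\<^sub>M M2)) = (\<integral>x. f x \<partial>M1) * (\<integral>y. g y \<partial>M2)" .
qed

lemma sum_sq:
  fixes X Y :: "_ \<Rightarrow> real"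
  assumes P1: "prob_space M1" and P2: "prob_space M2"
    and X: "integrable M1 X" "integrable M1 (\<lambda>x. (X x)\<^sup>2)"
    and Y: "integrable M2 Y" "integrable M2 (\<lambda>y. (Y y)\<^sup>2)"
  shows "integrable (M1 \<Otimes>\<^sub>M M2) (\<lambda>(x, y). X x + Y y)"
    and "(\<integral>p. (\<lambda>(x, y). X x + Y y) p \<partial>(M1 \<Otimes>\<^sub>M M2)) = (\<integral>x. X x \<partial>M1) + (\<integral>y. Y y \<partial>M2)"
    and "integrable (M1 \<Otimes>\<^sub>M M2) (\<lambda>(x, y). (X x + Y y)\<^sup>2)"
    and "(\<integral>p. (\<lambda>(x, y). (X x + Y y)\<^sup>2) p \<partial>(M1 \<Otimes>\<^sub>M M2))
          = (\<integral>x. (X x)\<^sup>2 \<partial>M1) + 2 * (\<integral>x. X x \<partial>M1) * (\<integral>y. Y y \<partial>M2) + (\<integral>y. (Y y)\<^sup>2 \<partial>M2)"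
proof -
  interpret Q1: prob_space M1 by (rule P1)
  interpret Q2: prob_space M2 by (rule P2)
  have one1: "integrable M1 (\<lambda>x. 1::real)" and one2: "integrable M2 (\<lambda>x. 1::real)" by auto
  note PI = prod_int[OF P1 P2]
  have i1: "integrable (M1 \<Otimes>\<^sub>M M2) (\<lambda>(x, y). X x * 1)" using PI(1)[OF X(1) one2] .
  have i2: "integrable (M1 \<Otimes>\<^sub>M M2) (\<lambda>(x, y). 1 * Y y)" using PI(1)[OF one1 Y(1)] .
  have i3: "integrable (M1 \<Otimes>\<^sub>M M2) (\<lambda>(x, y). (X x)\<^sup>2 * 1)" using PI(1)[OF X(2) one2] .
  have i4: "integrable (M1 \<Otimes>\<^sub>M M2) (\<lambda>(x, y). 1 * (Y y)\<^sup>2)" using PI(1)[OF one1 Y(2)] .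
  have i5: "integrable (M1 \<Otimes>\<^sub>M M2) (\<lambda>(x, y). X x * Y y)" using PI(1)[OF X(1) Y(1)] .
  have j1: "(\<integral>p. (\<lambda>(x, y). X x * 1) p \<partial>(M1 \<Otimes>\<^sub>M M2)) = (\<integral>x. X x \<partial>M1)" using PI(2)[OF X(1) one2] by (simp add: Q2.prob_space)
  have j2: "(\<integral>p. (\<lambda>(x, y). 1 * Y y) p \<partial>(M1 \<Otimes>\<^sub>M M2)) = (\<integral>y. Y y \<partial>M2)" using PI(2)[OF one1 Y(1)] by (simp add: Q1.prob_space)
  have j3: "(\<integral>p. (\<lambda>(x, y). (X x)\<^sup>2 * 1) p \<partial>(M1 \<Otimes>\<^sub>M M2)) = (\<integral>x. (X x)\<^sup>2 \<partial>M1)" using PI(2)[OF X(2) one2] by (simp add: Q2.prob_space)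
  have j4: "(\<integral>p. (\<lambda>(x, y). 1 * (Y y)\<^sup>2) p \<partial>(M1 \<Otimes>\<^sub>M M2)) = (\<integral>y. (Y y)\<^sup>2 \<partial>M2)" using PI(2)[OF one1 Y(2)] by (simp add: Q1.prob_space)
  have j5: "(\<integral>p. (\<lambda>(x, y). X x * Y y) p \<partial>(M1 \<Otimes>\<^sub>M M2)) = (\<integral>x. X x \<partial>M1) * (\<integral>y. Y y \<partial>M2)" using PI(2)[OF X(1) Y(1)] .
  have e1: "(\<lambda>(x, y). X x + Y y) = (\<lambda>p. (\<lambda>(x, y). X x * 1) p + (\<lambda>(x, y). 1 * Y y) p)"
    by auto
  have e2: "(\<lambda>(x, y). (X x + Y y)\<^sup>2) = (\<lambda>p. (\<lambda>(x, y). (X x)\<^sup>2 * 1) p + 2 * (\<lambda>(x, y). X x * Y y) p + (\<lambda>(x, y). 1 * (Y y)\<^sup>2) p)"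
    by (auto simp: power2_eq_square algebra_simps)
  show "integrable (M1 \<Otimes>\<^sub>M M2) (\<lambda>(x, y). X x + Y y)"
    unfolding e1 using i1 i2 by (rule Bochner_Integration.integrable_add)
  show "(\<integral>p. (\<lambda>(x, y). X x + Y y) p \<partial>(M1 \<Otimes>\<^sub>M M2)) = (\<integral>x. X x \<partial>M1) + (\<integral>y. Y y \<partial>M2)"
    unfolding e1 using i1 i2 j1 j2 by (subst Bochner_Integration.integral_add) auto
  show "integrable (M1 \<Otimes>\<^sub>M M2) (\<lambda>(x, y). (X x + Y y)\<^sup>2)"
    unfolding e2 using i3 i4 i5 by (intro Bochner_Integration.integrable_add Bochner_Integration.integrable_mult_right)
  show "(\<integral>p. (\<lambda>(x, y). (X x + Y y)\<^sup>2) p \<partial>(M1 \<Otimes>\<^sub>M M2))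
          = (\<integral>x. (X x)\<^sup>2 \<partial>M1) + 2 * (\<integral>x. X x \<partial>M1) * (\<integral>y. Y y \<partial>M2) + (\<integral>y. (Y y)\<^sup>2 \<partial>M2)"
    unfolding e2 using i3 i4 i5 j3 j4 j5
    by (subst Bochner_Integration.integral_add Bochner_Integration.integral_mult_right, 
        auto intro!: Bochner_Integration.integrable_add Bochner_Integration.integrable_mult_right)+
qed

lemma gauss_prob: "prob_space gauss"
  unfolding gauss_def by (rule prob_space_normal_density) simp

lemma sets_gauss[measurable_cong]: "sets gauss = sets borel"
  unfolding gauss_def by simp

lemma gauss_integral: "integrable lborel (\<lambda>x. std_normal_density x * f x) \<Longrightarrow> f \<in> borel_measurable borel \<Longrightarrow>
   integrable gauss f \<and> (\<integral>x. f x \<partial>gauss) = (\<integral>x. std_normal_density x * f x \<partial>lborel)"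
  unfolding gauss_def
  by (subst integrable_density, auto simp: integral_density)

lemma gauss_mom:
  "integrable gauss (\<lambda>x. c * x)" "(\<integral>x. c * x \<partial>gauss) = 0"
  "integrable gauss (\<lambda>x. (c * x)\<^sup>2)" "(\<integral>x. (c * x)\<^sup>2 \<partial>gauss) = c\<^sup>2"
proof -
  have a: "integrable lborel (\<lambda>x. std_normal_density x * (c * x))"
    using integrable_std_normal_moment[of 1] by (simp add: mult.left_commute)
  have b: "(\<integral>x. std_normal_density x * (c * x) \<partial>lborel) = 0"
    using integral_std_normal_moment_odd[of 0] by (simp add: mult.left_commute)
  have a2: "integrable lborel (\<lambda>x. std_normal_density x * (c * x)\<^sup>2)"
    using Bochner_Integration.integrable_mult_right[OF integrable_std_normal_moment[of 2], of "c\<^sup>2"]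
    by (simp add: power_mult_distrib mult_ac)
  have b2: "(\<integral>x. std_normal_density x * (c * x)\<^sup>2 \<partial>lborel) = c\<^sup>2"
  proof -
    have "(\<integral>x. std_normal_density x * (c * x)\<^sup>2 \<partial>lborel) = (\<integral>x. c\<^sup>2 * (std_normal_density x * x ^ (2 * 1)) \<partial>lborel)"
      by (simp add: power_mult_distrib mult_ac)
    also have "\<dots> = c\<^sup>2" using integral_std_normal_moment_even[of 1] by simp
    finally show ?thesis .
  qed
  show "integrable gauss (\<lambda>x. c * x)" "(\<integral>x. c * x \<partial>gauss) = 0"
    using gauss_integral[OF a] b by auto
  show "integrable gauss (\<lambda>x. (c * x)\<^sup>2)" "(\<integral>x. (c * x)\<^sup>2 \<partial>gauss) = c\<^sup>2"
    using gauss_integral[OF a2] b2 by auto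
qed

lemma unif_prob: "prob_space unif01"
  unfolding unif01_def by (rule prob_space_uniform_measure) auto


lemma gauss_rd: "real_distribution gauss"
  unfolding real_distribution_def real_distribution_axioms_def using gauss_prob sets_gauss by simp

lemma Phi_cdf: "Phi = cdf gauss"
proof
  fix x
  have "Phi x = (\<integral>t. indicator {..x} t \<partial>gauss)"
    unfolding Phi_def gauss_def by (subst integral_density) (auto simp: mult.commute)
  also have "\<dots> = measure gauss {..x}" by (simp add: gauss_def)
  finally show "Phi x = cdf gauss x" by (simp add: cdf_def)
qed

lemma gauss_interval_pos:
  assumes "x < y" shows "measure gauss {x<..y} > 0"
proof -
  define c where "c = std_normal_density (\<bar>x\<bar> + \<bar>y\<bar>)"
  have c: "c > 0" unfolding c_def by (simp add: normal_density_pos)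
  have m: "measure gauss {x<..y} = (\<integral>t. std_normal_density t * indicator {x<..y} t \<partial>lborel)"
  proof -
    have "measure gauss {x<..y} = (\<integral>t. indicator {x<..y} t \<partial>gauss)" by (simp add: gauss_def)
    also have "\<dots> = (\<integral>t. std_normal_density t * indicator {x<..y} t \<partial>lborel)"
      unfolding gauss_def by (subst integral_density) auto
    finally show ?thesis .
  qed
  have "c * (y - x) = (\<integral>t. c * indicator {x<..y} t \<partial>lborel)"
    using assms by simp
  also have "\<dots> \<le> (\<integral>t. std_normal_density t * indicator {x<..y} t \<partial>lborel)"
  proof (rule integral_mono)
    have "emeasure lborel {x<..y} = ennreal (y - x)" using assms by simp
    then have "integrable lborel (indicator {x<..y} :: real \<Rightarrow> real)"
      by (intro integrable_real_indicator) auto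
    then show "integrable lborel (\<lambda>t. c * indicator {x<..y} t)" by simp
    have "integrable lborel (\<lambda>t. indicator {x<..y} t *\<^sub>R std_normal_density t)"
      by (rule integrable_mult_indicator) (auto intro: integrable_normal_density)
    then show "integrable lborel (\<lambda>t. std_normal_density t * indicator {x<..y} t)"
      by (simp add: mult.commute)
    fix t
    show "c * indicator {x<..y} t \<le> std_normal_density t * indicator {x<..y} t"
    proof (cases "t \<in> {x<..y}")
      case True
      then have "\<bar>t\<bar> \<le> \<bar>x\<bar> + \<bar>y\<bar>" by auto
      then have "t\<^sup>2 \<le> (\<bar>x\<bar> + \<bar>y\<bar>)\<^sup>2"
        by (metis abs_ge_zero abs_le_square_iff abs_of_nonneg add_nonneg_nonneg)
      then have "exp (- ((\<bar>x\<bar> + \<bar>y\<bar>)\<^sup>2 / 2)) \<le> exp (- (t\<^sup>2 / 2))" by simp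
      then have "c \<le> std_normal_density t"
        unfolding c_def std_normal_density_def by (simp add: divide_right_mono)
      then show ?thesis using True by simp
    qed simp
  qed
  finally show ?thesis using m c assms
    by (metis diff_gt_0_iff_gt mult_pos_pos order_less_le_trans)
qed

lemma Phi_strict: "x < y \<Longrightarrow> Phi x < Phi y"
  using finite_borel_measure.cdf_diff_eq[OF real_distribution.finite_borel_measure_M[OF gauss_rd], of x y] gauss_interval_pos[of x y]
  unfolding Phi_cdf by simp

lemma Phi_cont: "isCont Phi x"
proof -
  have "emeasure gauss {x} = 0"
    unfolding gauss_def by (subst emeasure_density) (auto intro!: nn_integral_null_set simp: null_sets_def)
  then have "measure gauss {x} = 0" by (simp add: measure_def)
  then show ?thesis unfolding Phi_cdf using finite_borel_measure.isCont_cdf[OF real_distribution.finite_borel_measure_M[OF gauss_rd]] by simp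
qed

lemma Phi_bounds: "0 < Phi x" "Phi x < 1"
proof -
  show "0 < Phi x" using Phi_strict[of "x - 1" x] finite_borel_measure.cdf_nonneg[OF real_distribution.finite_borel_measure_M[OF gauss_rd], of "x - 1"]
    unfolding Phi_cdf by simp
  show "Phi x < 1" using Phi_strict[of x "x + 1"] real_distribution.cdf_bounded_prob[OF gauss_rd, of "x + 1"]
    unfolding Phi_cdf by simp
qed

lemma Phi_surj:
  assumes "0 < p" "p < 1" shows "\<exists>x. Phi x = p"
proof -
  have "eventually (\<lambda>x. Phi x < p) at_bot"
    using finite_borel_measure.cdf_lim_at_bot[OF real_distribution.finite_borel_measure_M[OF gauss_rd]] assms(1) unfolding Phi_cdf[symmetric]
    by (simp add: order_tendstoD)
  then obtain a where a: "Phi a < p" by (metis eventually_at_bot_linorder order_refl)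
  have "eventually (\<lambda>x. Phi x > p) at_top"
    using real_distribution.cdf_lim_at_top_prob[OF gauss_rd] assms(2) unfolding Phi_cdf[symmetric]
    by (simp add: order_tendstoD)
  then obtain b where b: "Phi b > p" by (metis eventually_at_top_linorder order_refl)
  have ab: "a \<le> b"
  proof (rule ccontr)
    assume "\<not> a \<le> b" then have "Phi b < Phi a" using Phi_strict by simp
    then show False using a b by simp
  qed
  have "continuous_on {a..b} Phi" using Phi_cont by (simp add: continuous_at_imp_continuous_on)
  then show ?thesis using IVT'[of Phi a p b] a b ab by auto
qed

lemma Phi_le_iff: "Phi x \<le> Phi y \<longleftrightarrow> x \<le> y"
proof
  assume "Phi x \<le> Phi y" then show "x \<le> y" using Phi_strict[of y x] by (cases "x \<le> y") auto
next
  assume "x \<le> y" then show "Phi x \<le> Phi y" using Phi_strict[of x y] by (cases "x = y") auto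
qed

lemma Phi_inv_Phi: "Phi_inv (Phi x) = x"
  unfolding Phi_inv_def
proof (rule the_equality)
  fix y assume "Phi y = Phi x"
  then have "y \<le> x" "x \<le> y" using Phi_le_iff[of y x] Phi_le_iff[of x y] by simp_all
  then show "y = x" by simp
qed simp

lemma Phi_Phi_inv: assumes "0 < p" "p < 1" shows "Phi (Phi_inv p) = p"
proof -
  obtain x where x: "Phi x = p" using Phi_surj[OF assms] by blast
  then have "Phi_inv p = x" using Phi_inv_Phi[of x] by simp
  then show ?thesis using x by simp
qed

lemma Phi_inv_out: assumes "\<not> (0 < p \<and> p < 1)" shows "Phi_inv p = Phi_inv 0"
proof -
  have "Phi x \<noteq> p" "Phi x \<noteq> 0" for x using Phi_bounds[of x] assms by auto
  then have "(\<lambda>x. Phi x = p) = (\<lambda>x. Phi x = 0)" by auto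
  then show ?thesis unfolding Phi_inv_def by simp
qed

lemma Phi_inv_le: "Phi_inv w \<le> a \<longleftrightarrow> (0 < w \<and> w < 1 \<and> w \<le> Phi a) \<or> (\<not> (0 < w \<and> w < 1) \<and> Phi_inv 0 \<le> a)"
proof (cases "0 < w \<and> w < 1")
  case True
  then show ?thesis using Phi_le_iff[of "Phi_inv w" a] Phi_Phi_inv[of w] by auto
next
  case False
  then show ?thesis using False Phi_inv_out[OF False] by auto
qed

lemma Phi_meas[measurable]: "Phi \<in> borel_measurable borel"
  by (rule borel_measurable_continuous_onI) (simp add: Phi_cont continuous_at_imp_continuous_on)

lemma Phi_inv_meas[measurable]: "Phi_inv \<in> borel_measurable borel"
  unfolding borel_measurable_iff_le
proof
  fix a
  have eq: "{w \<in> space borel. Phi_inv w \<le> a} = ({0<..<1} \<inter> {..Phi a}) \<union> (if Phi_inv 0 \<le> a then UNIV - {0<..<1} else {})"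
  proof (rule set_eqI)
    fix w
    have "Phi_inv w \<le> a \<longleftrightarrow> (0 < w \<and> w < 1 \<and> w \<le> Phi a) \<or> (\<not> (0 < w \<and> w < 1) \<and> Phi_inv 0 \<le> a)"
      by (rule Phi_inv_le)
    then show "w \<in> {w \<in> space borel. Phi_inv w \<le> a} \<longleftrightarrow> w \<in> ({0<..<1} \<inter> {..Phi a}) \<union> (if Phi_inv 0 \<le> a then UNIV - {0<..<1} else {})"
      by (cases "Phi_inv 0 \<le> a") auto
  qed
  have s1: "{0<..<1::real} \<in> sets borel" "{..Phi a} \<in> sets borel" by simp_all
  show "{w \<in> space borel. Phi_inv w \<le> a} \<in> sets borel"
    unfolding eq using s1 by (intro sets.Un sets.Int) (auto intro: sets.Diff)
qed

lemma unif_distr: "distr gauss borel Phi = unif01"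
proof (rule cdf_unique)
  show "real_distribution (distr gauss borel Phi)"
    unfolding real_distribution_def real_distribution_axioms_def
    using prob_space.real_distribution_distr[OF gauss_prob, of Phi] Phi_meas
    by (simp add: measurable_cong_sets[OF sets_gauss refl] real_distribution_def real_distribution_axioms_def)
  show "real_distribution unif01"
    unfolding real_distribution_def real_distribution_axioms_def using unif_prob
    by (simp add: unif01_def)
  show "cdf (distr gauss borel Phi) = cdf unif01"
  proof
    fix t
    have Pm: "Phi \<in> measurable gauss borel" using Phi_meas by (simp add: measurable_cong_sets[OF sets_gauss refl])
    have L: "cdf (distr gauss borel Phi) t = measure gauss {x. Phi x \<le> t}"
      unfolding cdf_def by (subst measure_distr[OF Pm]) (auto simp: gauss_def vimage_def)
    have R: "cdf unif01 t = measure lborel ({0..1} \<inter> {..t})"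
      unfolding cdf_def unif01_def by (subst measure_uniform_measure) auto
    show "cdf (distr gauss borel Phi) t = cdf unif01 t"
    proof (cases "t \<le> 0")
      case True
      have "{x. Phi x \<le> t} = {}" using Phi_bounds True by (auto simp: not_le intro: order_le_less_trans)
      moreover have "measure lborel ({0..1} \<inter> {..t}) = 0"
      proof (cases "t = 0")
        case True then have "{0..1} \<inter> {..t} = {0::real}" by auto
        then show ?thesis by simp
      next
        case False then have "{0..1} \<inter> {..t} = ({}::real set)" using \<open>t \<le> 0\<close> by auto
        then show ?thesis by simp
      qed
      ultimately show ?thesis using L R by simp
    next
      case False
      show ?thesis
      proof (cases "t < 1")
        case True
        have tt: "Phi (Phi_inv t) = t" using Phi_Phi_inv[of t] True False by simp
        have "Phi x \<le> t \<longleftrightarrow> x \<le> Phi_inv t" for x using Phi_le_iff[of x "Phi_inv t"] tt by simp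
        then have "{x. Phi x \<le> t} = {..Phi_inv t}" by auto
        then have "measure gauss {x. Phi x \<le> t} = t"
          using Phi_Phi_inv[of t] True False unfolding Phi_cdf cdf_def by simp
        moreover have "{0..1} \<inter> {..t} = {0..t}" using True by auto
        ultimately show ?thesis using L R False by simp
      next
        case f2: False
        have "{x. Phi x \<le> t} = UNIV" using Phi_bounds f2 by (auto simp: not_less intro: order_less_imp_le order_less_le_trans)
        then have "measure gauss {x. Phi x \<le> t} = 1"
          using prob_space.prob_space[OF gauss_prob] by (simp add: gauss_def)
        moreover have "{0..1} \<inter> {..t} = {0..1}" using f2 by auto
        ultimately show ?thesis using L R by simp
      qed
    qed
  qed
qed

lemma unif_transfer:
  fixes f :: "real \<Rightarrow> real"
  assumes [measurable]: "f \<in> borel_measurable borel"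
  shows "integrable unif01 (\<lambda>e. f (Phi_inv e)) \<longleftrightarrow> integrable gauss f"
    and "(\<integral>e. f (Phi_inv e) \<partial>unif01) = (\<integral>x. f x \<partial>gauss)"
proof -
  have Pm: "Phi \<in> measurable gauss borel" using Phi_meas by (simp add: measurable_cong_sets[OF sets_gauss refl])
  show "integrable unif01 (\<lambda>e. f (Phi_inv e)) \<longleftrightarrow> integrable gauss f"
    unfolding unif_distr[symmetric] using integrable_distr_eq[OF Pm, of "\<lambda>e. f (Phi_inv e)"] by (simp add: Phi_inv_Phi)
  show "(\<integral>e. f (Phi_inv e) \<partial>unif01) = (\<integral>x. f x \<partial>gauss)"
    unfolding unif_distr[symmetric] using integral_distr[OF Pm, of "\<lambda>e. f (Phi_inv e)"] by (simp add: Phi_inv_Phi)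
qed

lemma unif_mom:
  "integrable unif01 Phi_inv" "(\<integral>e. Phi_inv e \<partial>unif01) = 0"
  "integrable unif01 (\<lambda>e. (Phi_inv e)\<^sup>2)" "(\<integral>e. (Phi_inv e)\<^sup>2 \<partial>unif01) = 1"
  using unif_transfer[of "\<lambda>x. x"] unif_transfer[of "\<lambda>x. x\<^sup>2"] gauss_mom[of 1] by simp_all

lemma theta_star_dec:
  assumes kappa: "\<kappa> > 0" and cB: "0 \<le> cB" and adm: "cBB\<^sup>2 \<le> \<gamma>\<^sup>2 * cB"
  obtains p q where "\<And>xs z. theta_star \<kappa> \<gamma> cB cBB xs z - sqrt (\<kappa> * cB) * z = p * xs + q * z"
    and "p\<^sup>2 + q\<^sup>2 = \<kappa> * (\<gamma>\<^sup>2 + cB - 2 * cBB)"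
proof (cases "cB > 0")
  case True
  define p where "p = sqrt (\<kappa> * (\<gamma>\<^sup>2 - cBB\<^sup>2 / cB))"
  define q where "q = cBB * sqrt (\<kappa> / cB) - sqrt (\<kappa> * cB)"
  have h: "cBB\<^sup>2 / cB \<le> \<gamma>\<^sup>2" using adm True by (simp add: divide_le_eq mult.commute)
  have p2: "p\<^sup>2 = \<kappa> * (\<gamma>\<^sup>2 - cBB\<^sup>2 / cB)" unfolding p_def using h kappa by simp
  have ss: "sqrt (\<kappa> / cB) * sqrt (\<kappa> * cB) = \<kappa>"
    using True kappa by (simp add: real_sqrt_mult[symmetric])
  have s1: "(sqrt (\<kappa> / cB))\<^sup>2 = \<kappa> / cB" using True kappa by simp
  have s2: "(sqrt (\<kappa> * cB))\<^sup>2 = \<kappa> * cB" using True kappa by simp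
  have q2: "q\<^sup>2 = cBB\<^sup>2 * (\<kappa> / cB) - 2 * cBB * \<kappa> + \<kappa> * cB"
    unfolding q_def power2_diff power_mult_distrib s1 s2 using ss by (simp add: algebra_simps)
  show ?thesis
  proof (rule that)
    show "theta_star \<kappa> \<gamma> cB cBB xs z - sqrt (\<kappa> * cB) * z = p * xs + q * z" for xs z
      using True unfolding theta_star_def p_def q_def by (simp add: algebra_simps)
    show "p\<^sup>2 + q\<^sup>2 = \<kappa> * (\<gamma>\<^sup>2 + cB - 2 * cBB)"
      unfolding p2 q2 using True by (simp add: field_simps)
  qed
next
  case False
  then have c0: "cB = 0" using cB by simp
  then have "cBB = 0" using adm by simp
  show ?thesis
  proof (rule that[of "sqrt \<kappa> * \<gamma>" 0])
    show "theta_star \<kappa> \<gamma> cB cBB xs z - sqrt (\<kappa> * cB) * z = sqrt \<kappa> * \<gamma> * xs + 0 * z" for xs z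
      using c0 unfolding theta_star_def by simp
    show "(sqrt \<kappa> * \<gamma>)\<^sup>2 + 0\<^sup>2 = \<kappa> * (\<gamma>\<^sup>2 + cB - 2 * cBB)"
      using c0 \<open>cBB = 0\<close> kappa by (simp add: power_mult_distrib)
  qed
qed

lemma Ge_prob: "prob_space (gauss \<Otimes>\<^sub>M (gauss \<Otimes>\<^sub>M unif01))"
  by (intro prob_space_pair gauss_prob unif_prob)

lemma r_vals:
  fixes \<kappa> \<gamma> vB cB cBB :: real
  assumes kappa: "\<kappa> > 0" and adm: "0 \<le> cB" "cB \<le> vB" "cBB\<^sup>2 \<le> \<gamma>\<^sup>2 * cB"
  shows "r1 T_lin A_lin \<kappa> \<gamma> vB cB cBB = 1 / (\<kappa> * (vB - cB) + 1)"
    and "r2 T_lin A_lin \<kappa> \<gamma> vB cB cBB = - (\<kappa> * (vB - cB)) / (\<kappa> * (vB - cB) + 1)"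
    and "r3 T_lin A_lin \<kappa> \<gamma> vB cB cBB = (\<kappa> * (\<gamma>\<^sup>2 + cB - 2 * cBB) + 1) / (\<kappa> * (vB - cB) + 1)\<^sup>2"
proof -
  have kv: "0 \<le> \<kappa> * (vB - cB)" using kappa adm by simp
  interpret P: prob_space "gauss \<Otimes>\<^sub>M (gauss \<Otimes>\<^sub>M unif01)" by (rule Ge_prob)
  note SI = s_integrands[OF adm(1) kv]
  show "r1 T_lin A_lin \<kappa> \<gamma> vB cB cBB = 1 / (\<kappa> * (vB - cB) + 1)"
    unfolding r1_def E_Ge_def SI(1) by (simp add: P.prob_space split_beta')
  show "r2 T_lin A_lin \<kappa> \<gamma> vB cB cBB = - (\<kappa> * (vB - cB)) / (\<kappa> * (vB - cB) + 1)"
    unfolding r2_def E_Ge_def SI(2) by (simp add: P.prob_space split_beta')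
  obtain p q where pq: "\<And>xs z. theta_star \<kappa> \<gamma> cB cBB xs z - sqrt (\<kappa> * cB) * z = p * xs + q * z"
    and pq2: "p\<^sup>2 + q\<^sup>2 = \<kappa> * (\<gamma>\<^sup>2 + cB - 2 * cBB)"
    using theta_star_dec[OF kappa adm(1) adm(3)] by blast
  define Y where "Y = (\<lambda>(z::real, e::real). q * z + Phi_inv e)"
  note S1 = sum_sq[OF gauss_prob unif_prob gauss_mom(1,3)[of q] unif_mom(1,3)]
  have Yi: "integrable (gauss \<Otimes>\<^sub>M unif01) Y" "integrable (gauss \<Otimes>\<^sub>M unif01) (\<lambda>y. (Y y)\<^sup>2)"
    using S1(1,3) unfolding Y_def by (simp_all add: split_beta')
  have Yv: "(\<integral>y. Y y \<partial>(gauss \<Otimes>\<^sub>M unif01)) = 0" "(\<integral>y. (Y y)\<^sup>2 \<partial>(gauss \<Otimes>\<^sub>M unif01)) = q\<^sup>2 + 1"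
    using S1(2,4) unfolding Y_def gauss_mom unif_mom by (simp_all add: split_beta')
  note S2 = sum_sq[OF gauss_prob prob_space_pair[OF gauss_prob unif_prob] gauss_mom(1,3)[of p] Yi]
  have pt: "T_lin e (theta_star \<kappa> \<gamma> cB cBB xs z) - sqrt (\<kappa> * cB) * z = p * xs + Y (z, e)" for xs z e
    unfolding T_lin_def Y_def using pq[of xs z] by simp
  have eq: "(\<lambda>(xs, z, e). ((T_lin e (theta_star \<kappa> \<gamma> cB cBB xs z) - sqrt (\<kappa> * cB) * z) / (\<kappa> * (vB - cB) + 1))\<^sup>2)
      = (\<lambda>w. (1 / (\<kappa> * (vB - cB) + 1))\<^sup>2 * (\<lambda>(x, y). (p * x + Y y)\<^sup>2) w)"
    using pt by (auto simp: fun_eq_iff power_divide split: prod.splits)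
  show "r3 T_lin A_lin \<kappa> \<gamma> vB cB cBB = (\<kappa> * (\<gamma>\<^sup>2 + cB - 2 * cBB) + 1) / (\<kappa> * (vB - cB) + 1)\<^sup>2"
    unfolding r3_def E_Ge_def SI(3) eq integral_mult_right_zero S2(4) gauss_mom Yv
    using pq2 by (simp add: power_divide add.assoc)
qed

lemma h_avg_quad:
  fixes q1 m c0 c1 c2 :: real
  assumes q1: "q1 > 0" and g: "\<And>b. g b = c0 + c1 * b + c2 * b\<^sup>2"
  shows "h_avg gauss m (1 / q1) g = c0 + c1 * (q1 * m / (1 + q1)) + c2 * ((q1 * m / (1 + q1))\<^sup>2 + 1 / (1 + q1))"
proof -
  have gm: "g = (\<lambda>b. c0 + c1 * b + c2 * b\<^sup>2)" using g by auto
  have [measurable]: "g \<in> borel_measurable borel" unfolding gm by measurable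
  define E where "E = (\<lambda>b. exp (- (b - m)\<^sup>2 / (2 * (1 / q1))))"
  have [measurable]: "E \<in> borel_measurable borel" unfolding E_def by measurable
  have n: "(\<integral>b. g b * E b \<partial>gauss) = (\<integral>b. g b * (std_normal_density b * E b) \<partial>lborel)"
    unfolding gauss_def by (subst integral_density) (auto simp: mult_ac)
  have d: "(\<integral>b. E b \<partial>gauss) = (\<integral>b. std_normal_density b * E b \<partial>lborel)"
    unfolding gauss_def by (subst integral_density) auto
  have w: "std_normal_density b * E b = (1 / sqrt (2 * pi)) * exp (- ((1 + q1) * b\<^sup>2) / 2 + (q1 * m) * b + (- q1 * m\<^sup>2 / 2))" for b
  proof -
    have eq: "- b\<^sup>2 / 2 + - (b - m)\<^sup>2 / (2 * (1 / q1)) = - ((1 + q1) * b\<^sup>2) / 2 + (q1 * m) * b + (- q1 * m\<^sup>2 / 2)"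
      using q1 by (simp add: field_simps power2_eq_square)
    have "exp (- b\<^sup>2 / 2) * exp (- (b - m)\<^sup>2 / (2 * (1 / q1))) = exp (- ((1 + q1) * b\<^sup>2) / 2 + (q1 * m) * b + (- q1 * m\<^sup>2 / 2))"
      by (simp only: exp_add[symmetric] eq)
    then show ?thesis unfolding std_normal_density_def E_def
      by (simp only: mult.assoc)
  qed
  have "h_avg gauss m (1 / q1) g = (\<integral>b. g b * (std_normal_density b * E b) \<partial>lborel) / (\<integral>b. std_normal_density b * E b \<partial>lborel)"
    using n d unfolding h_avg_def by (simp add: E_def)
  also have "\<dots> = c0 + c1 * (q1 * m / (1 + q1)) + c2 * ((q1 * m / (1 + q1))\<^sup>2 + 1 / (1 + q1))"
    by (rule gauss_ratio[OF _ _ w g]) (use q1 in auto)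
  finally show ?thesis .
qed

lemma h_vals:
  fixes q1 q2 q3 \<gamma> :: real and \<pi> :: "real measure"
  assumes q1: "q1 > 0" and q3: "q3 \<ge> 0"
    and pi_prob: "prob_space \<pi>" and pi_sets: "sets \<pi> = sets borel"
    and pi_mom: "integrable \<pi> (\<lambda>x. x\<^sup>2)" "(\<integral>x. x\<^sup>2 \<partial>\<pi>) = \<gamma>\<^sup>2"
  shows "h_cB \<pi> gauss 1 q1 q2 q3 = ((q2 + 1)\<^sup>2 * \<gamma>\<^sup>2 + q3) / (q1 + 1)\<^sup>2"
    and "h_vB \<pi> gauss 1 q1 q2 q3 = 1 / (q1 + 1) + h_cB \<pi> gauss 1 q1 q2 q3"
    and "h_cBB \<pi> gauss 1 q1 q2 q3 = (q2 + 1) * \<gamma>\<^sup>2 / (q1 + 1)"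
proof -
  interpret PI: prob_space \<pi> by (rule pi_prob)
  interpret P: prob_space "gauss \<Otimes>\<^sub>M \<pi>" by (intro prob_space_pair gauss_prob pi_prob)
  have [measurable]: "(\<lambda>x. x) \<in> borel_measurable \<pi>"
    by (subst measurable_cong_sets[OF pi_sets refl]) simp
  have ix: "integrable \<pi> (\<lambda>x. x)"
    by (rule PI.square_integrable_imp_integrable) (use pi_mom in auto)
  have pim: "integrable \<pi> (\<lambda>x. k * x)" "integrable \<pi> (\<lambda>x. (k * x)\<^sup>2)" "(\<integral>x. (k * x)\<^sup>2 \<partial>\<pi>) = k\<^sup>2 * \<gamma>\<^sup>2" for k
    using ix pi_mom by (simp_all add: power_mult_distrib)
  have qq: "(1 + q1)\<^sup>2 \<noteq> 0" "(q1 + 1)\<^sup>2 \<noteq> 0" "1 + q1 \<noteq> 0" "q1 + 1 \<noteq> 0" using q1 by auto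
  define c where "c = q1 / (1 + q1)"
  define a where "a = c * (sqrt q3 / q1)"
  define bb where "bb = c * ((q2 + 1) / q1)"
  have M: "q1 * h_m 1 q1 q2 q3 Bs Z / (1 + q1) = a * Z + bb * Bs" for Bs Z
  proof -
    have "q1 * h_m 1 q1 q2 q3 Bs Z / (1 + q1) = c * h_m 1 q1 q2 q3 Bs Z" by (simp add: c_def)
    also have "\<dots> = a * Z + bb * Bs"
      unfolding h_m_def h_alpha_def h_sigma_def a_def bb_def by (simp add: algebra_simps)
    finally show ?thesis .
  qed
  have HQ: "h_avg gauss (h_m 1 q1 q2 q3 Bs Z) (1 / q1) g = c0 + c1 * (a * Z + bb * Bs) + c2 * ((a * Z + bb * Bs)\<^sup>2 + 1 / (1 + q1))"
    if "\<And>b. g b = c0 + c1 * b + c2 * b\<^sup>2" for g c0 c1 c2 Bs Z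
    using h_avg_quad[OF q1 that, of "h_m 1 q1 q2 q3 Bs Z"] unfolding M .
  have H2: "h_avg gauss (h_m 1 q1 q2 q3 Bs Z) (1 / q1) (\<lambda>b. b\<^sup>2) = (a * Z + bb * Bs)\<^sup>2 + 1 / (1 + q1)" for Bs Z
    using HQ[of "\<lambda>b. b\<^sup>2" 0 0 1] by simp
  have H1: "h_avg gauss (h_m 1 q1 q2 q3 Bs Z) (1 / q1) (\<lambda>b. b) = a * Z + bb * Bs" for Bs Z
    using HQ[of "\<lambda>b. b" 0 1 0] by simp
  have H3: "h_avg gauss (h_m 1 q1 q2 q3 Bs Z) (1 / q1) (\<lambda>b. b * Bs) = Bs * (a * Z + bb * Bs)" for Bs Z
    using HQ[of "\<lambda>b. b * Bs" 0 Bs 0] by (simp add: mult.commute)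
  note S = sum_sq[OF gauss_prob pi_prob gauss_mom(1,3)[of a] pim(1,2)[of bb]]
  have sq: "(\<integral>p. (\<lambda>(Z, Bs). (a * Z + bb * Bs)\<^sup>2) p \<partial>(gauss \<Otimes>\<^sub>M \<pi>)) = a\<^sup>2 + bb\<^sup>2 * \<gamma>\<^sup>2"
    using S(4) unfolding gauss_mom pim by simp
  have a2: "a\<^sup>2 = q3 / (1 + q1)\<^sup>2" unfolding a_def c_def using q1 q3 by (simp add: power_divide power_mult_distrib)
  have b2: "bb\<^sup>2 = (q2 + 1)\<^sup>2 / (1 + q1)\<^sup>2" unfolding bb_def c_def using q1 by (simp add: power_divide power_mult_distrib)
  show cB: "h_cB \<pi> gauss 1 q1 q2 q3 = ((q2 + 1)\<^sup>2 * \<gamma>\<^sup>2 + q3) / (q1 + 1)\<^sup>2"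
    unfolding h_cB_def E_ZB_def H1 sq a2 b2 using qq by (simp add: field_simps)
  have "h_vB \<pi> gauss 1 q1 q2 q3 = (\<integral>p. (\<lambda>(Z, Bs). (a * Z + bb * Bs)\<^sup>2) p + 1 / (1 + q1) \<partial>(gauss \<Otimes>\<^sub>M \<pi>))"
    unfolding h_vB_def E_ZB_def H2 by (simp add: split_beta')
  also have "\<dots> = a\<^sup>2 + bb\<^sup>2 * \<gamma>\<^sup>2 + 1 / (1 + q1)"
    using S(3) sq by (subst Bochner_Integration.integral_add) (auto simp: P.prob_space)
  finally show "h_vB \<pi> gauss 1 q1 q2 q3 = 1 / (q1 + 1) + h_cB \<pi> gauss 1 q1 q2 q3"
    unfolding cB a2 b2 using qq by (simp add: field_simps)
  note PR = prod_int[OF gauss_prob pi_prob]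
  have e3: "(\<lambda>(Z, Bs). h_avg gauss (h_m 1 q1 q2 q3 Bs Z) (1 / q1) (\<lambda>b. b * Bs))
      = (\<lambda>p. (\<lambda>(Z, Bs). (a * Z) * Bs) p + (\<lambda>(Z, Bs). 1 * (bb * Bs\<^sup>2)) p)"
    unfolding H3 by (auto simp: fun_eq_iff power2_eq_square algebra_simps)
  have one: "integrable gauss (\<lambda>x. 1::real)"
    using prob_space.finite_measure[OF gauss_prob] by (simp add: finite_measure.integrable_const)
  have pb: "integrable \<pi> (\<lambda>x. bb * x\<^sup>2)" using pi_mom(1) by simp
  note i1 = PR(1)[OF gauss_mom(1)[of a] ix] and i2 = PR(1)[OF one pb]
  note v1 = PR(2)[OF gauss_mom(1)[of a] ix] and v2 = PR(2)[OF one pb]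
  have "h_cBB \<pi> gauss 1 q1 q2 q3 = (\<integral>x. a * x \<partial>gauss) * (\<integral>x. x \<partial>\<pi>) + (\<integral>x. 1 \<partial>gauss) * (\<integral>x. bb * x\<^sup>2 \<partial>\<pi>)"
    unfolding h_cBB_def E_ZB_def e3 Bochner_Integration.integral_add[OF i1 i2] v1 v2 ..
  also have "\<dots> = bb * \<gamma>\<^sup>2" using gauss_mom pi_mom by (simp add: prob_space.prob_space[OF gauss_prob])
  also have "\<dots> = (q2 + 1) * \<gamma>\<^sup>2 / (q1 + 1)"
  proof -
    have qa: "q1 + q1 * q1 \<noteq> 0" using q1 by (metis add_pos_pos less_irrefl mult_pos_pos)
    have "bb = (q2 + 1) / (q1 + 1)" unfolding bb_def c_def using q1 qq qa by (simp add: field_simps)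
    then show "bb * \<gamma>\<^sup>2 = (q2 + 1) * \<gamma>\<^sup>2 / (q1 + 1)" by simp
  qed
  finally show "h_cBB \<pi> gauss 1 q1 q2 q3 = (q2 + 1) * \<gamma>\<^sup>2 / (q1 + 1)" .
qed

theorem proposition2:
  fixes \<kappa> \<gamma> vB cB cBB :: real and \<pi> \<mu> :: "real measure"
  assumes kappa: "\<kappa> > 0" and gamma: "\<gamma> > 0"
    and pi_prob: "prob_space \<pi>" and pi_sets: "sets \<pi> = sets borel"
    and pi_mom: "integrable \<pi> (\<lambda>x. x\<^sup>2)" "(\<integral>x. x\<^sup>2 \<partial>\<pi>) = \<gamma>\<^sup>2"
    and mu_prob: "prob_space \<mu>" and mu_sets: "sets \<mu> = sets borel"
    and adm: "0 \<le> cB" "cB \<le> vB" "cBB\<^sup>2 \<le> \<gamma>\<^sup>2 * cB"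
  shows
    "(r1 T_lin A_lin \<kappa> \<gamma> vB cB cBB = 1 / (\<kappa> * (vB - cB) + 1)
     \<and> r2 T_lin A_lin \<kappa> \<gamma> vB cB cBB = - (\<kappa> * (vB - cB)) / (\<kappa> * (vB - cB) + 1)
     \<and> r3 T_lin A_lin \<kappa> \<gamma> vB cB cBB
         = (\<kappa> * (\<gamma>\<^sup>2 + cB - 2 * cBB) + 1) / (\<kappa> * (vB - cB) + 1)\<^sup>2)
     \<and> (\<mu> = gauss \<and> (\<integral>x. x \<partial>\<pi>) = 0 \<longrightarrow>
     (let q1 = r1 T_lin A_lin \<kappa> \<gamma> vB cB cBB;
          q2 = r2 T_lin A_lin \<kappa> \<gamma> vB cB cBB;
          q3 = r3 T_lin A_lin \<kappa> \<gamma> vB cB cBB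
      in h_vB \<pi> \<mu> 1 q1 q2 q3 = 1 / (q1 + 1) + h_cB \<pi> \<mu> 1 q1 q2 q3
       \<and> h_cB \<pi> \<mu> 1 q1 q2 q3 = ((q2 + 1)\<^sup>2 * \<gamma>\<^sup>2 + q3) / (q1 + 1)\<^sup>2
       \<and> h_cBB \<pi> \<mu> 1 q1 q2 q3 = (q2 + 1) * \<gamma>\<^sup>2 / (q1 + 1)))
     \<and> (\<mu> = gauss \<and> (\<integral>x. x \<partial>\<pi>) = 0 \<longrightarrow>
     (let q1 = r1 T_lin A_lin \<kappa> \<gamma> vB cB cBB;
          q2 = r2 T_lin A_lin \<kappa> \<gamma> vB cB cBB;
          q3 = r3 T_lin A_lin \<kappa> \<gamma> vB cB cBB
      in vB = h_vB \<pi> \<mu> 1 q1 q2 q3 \<and> cB = h_cB \<pi> \<mu> 1 q1 q2 q3 \<and> cBB = h_cBB \<pi> \<mu> 1 q1 q2 q3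
         \<longrightarrow> q1 = q2 + 1 \<and> q2 + 1 = sqrt ((\<kappa> / 2)\<^sup>2 + 1) - \<kappa> / 2))"
proof -
  note R = r_vals[OF kappa adm]
  define k where "k = \<kappa> * (vB - cB)"
  have k: "0 \<le> k" using kappa adm by (simp add: k_def)
  define q1 where "q1 = r1 T_lin A_lin \<kappa> \<gamma> vB cB cBB"
  define q2 where "q2 = r2 T_lin A_lin \<kappa> \<gamma> vB cB cBB"
  define q3 where "q3 = r3 T_lin A_lin \<kappa> \<gamma> vB cB cBB"
  have q1v: "q1 = 1 / (k + 1)" using R(1) by (simp add: q1_def k_def)
  have q2v: "q2 = - k / (k + 1)" using R(2) by (simp add: q2_def k_def)
  have q1p: "q1 > 0" using k q1v by simp
  have q21: "q2 + 1 = q1" using k unfolding q1v q2v by (simp add: field_simps)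
  have cbb: "2 * cBB \<le> \<gamma>\<^sup>2 + cB"
  proof (rule power2_le_imp_le)
    have "(2 * cBB)\<^sup>2 = 4 * cBB\<^sup>2" by (simp add: power_mult_distrib)
    also have "\<dots> \<le> 4 * (\<gamma>\<^sup>2 * cB)" using adm(3) by simp
    also have "\<dots> \<le> (\<gamma>\<^sup>2 + cB)\<^sup>2" using sum_squares_ge_zero[of "\<gamma>\<^sup>2 - cB" 0]
      by (simp add: power2_eq_square algebra_simps)
    finally show "(2 * cBB)\<^sup>2 \<le> (\<gamma>\<^sup>2 + cB)\<^sup>2" .
    show "0 \<le> \<gamma>\<^sup>2 + cB" using adm(1) by simp
  qed
  have q3p: "q3 \<ge> 0" using R(3) cbb kappa unfolding q3_def by (simp add: add_nonneg_nonneg)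
  note HV = h_vals[OF q1p q3p pi_prob pi_sets pi_mom]
  show ?thesis
  proof (intro conjI impI)
    show "r1 T_lin A_lin \<kappa> \<gamma> vB cB cBB = 1 / (\<kappa> * (vB - cB) + 1)"
      "r2 T_lin A_lin \<kappa> \<gamma> vB cB cBB = - (\<kappa> * (vB - cB)) / (\<kappa> * (vB - cB) + 1)"
      "r3 T_lin A_lin \<kappa> \<gamma> vB cB cBB = (\<kappa> * (\<gamma>\<^sup>2 + cB - 2 * cBB) + 1) / (\<kappa> * (vB - cB) + 1)\<^sup>2"
      using R by simp_all
  next
    assume mu: "\<mu> = gauss \<and> (\<integral>x. x \<partial>\<pi>) = 0"
    show "let q1 = r1 T_lin A_lin \<kappa> \<gamma> vB cB cBB;
          q2 = r2 T_lin A_lin \<kappa> \<gamma> vB cB cBB;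
          q3 = r3 T_lin A_lin \<kappa> \<gamma> vB cB cBB
      in h_vB \<pi> \<mu> 1 q1 q2 q3 = 1 / (q1 + 1) + h_cB \<pi> \<mu> 1 q1 q2 q3
       \<and> h_cB \<pi> \<mu> 1 q1 q2 q3 = ((q2 + 1)\<^sup>2 * \<gamma>\<^sup>2 + q3) / (q1 + 1)\<^sup>2
       \<and> h_cBB \<pi> \<mu> 1 q1 q2 q3 = (q2 + 1) * \<gamma>\<^sup>2 / (q1 + 1)"
      unfolding Let_def q1_def[symmetric] q2_def[symmetric] q3_def[symmetric] using mu HV by simp
  next
    assume mu: "\<mu> = gauss \<and> (\<integral>x. x \<partial>\<pi>) = 0"
    show "let q1 = r1 T_lin A_lin \<kappa> \<gamma> vB cB cBB;
          q2 = r2 T_lin A_lin \<kappa> \<gamma> vB cB cBB;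
          q3 = r3 T_lin A_lin \<kappa> \<gamma> vB cB cBB
      in vB = h_vB \<pi> \<mu> 1 q1 q2 q3 \<and> cB = h_cB \<pi> \<mu> 1 q1 q2 q3 \<and> cBB = h_cBB \<pi> \<mu> 1 q1 q2 q3
         \<longrightarrow> q1 = q2 + 1 \<and> q2 + 1 = sqrt ((\<kappa> / 2)\<^sup>2 + 1) - \<kappa> / 2"
      unfolding Let_def q1_def[symmetric] q2_def[symmetric] q3_def[symmetric]
    proof (intro impI conjI)
      assume fp: "vB = h_vB \<pi> \<mu> 1 q1 q2 q3 \<and> cB = h_cB \<pi> \<mu> 1 q1 q2 q3 \<and> cBB = h_cBB \<pi> \<mu> 1 q1 q2 q3"
      show "q1 = q2 + 1" using q21 by simp
      have d: "vB - cB = 1 / (q1 + 1)" using fp HV(2) mu by simp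
      have kq: "k = \<kappa> / (q1 + 1)" unfolding k_def d by simp
      have eq: "q1 * (q1 + 1 + \<kappa>) = q1 + 1"
        using q1v unfolding kq using q1p kappa by (simp add: field_simps)
      have sq: "(q1 + \<kappa> / 2)\<^sup>2 = (\<kappa> / 2)\<^sup>2 + 1"
        using eq by (simp add: power2_eq_square algebra_simps)
      have "sqrt ((\<kappa> / 2)\<^sup>2 + 1) = q1 + \<kappa> / 2"
        by (rule real_sqrt_unique[OF sq]) (use q1p kappa in simp)
      then show "q2 + 1 = sqrt ((\<kappa> / 2)\<^sup>2 + 1) - \<kappa> / 2" using q21 by simp
    qed
  qed
qed

end
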